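(* Let $f_1,f_2:\mathbb{R}^n\to[-\infty,\infty]$ be proper nearly convex functions with $\operatorname{ri}(\operatorname{dom} f_1)\cap\operatorname{ri}(\operatorname{dom} f_2)\neq\emptyset$. Then $(f_1+f_2)^*(w)=(f_1^*\square f_2^* )(w)$ for all $w\in\mathbb{R}^n$. Moreover, if $(f_1+f_2)^*(w)\in\mathbb{R}$, there exist $w_1,w_2\in\mathbb{R}^n$ with $w=w_1+w_2$ and $(f_1+f_2)^*(w)=f_1^*(w_1)+f_2^*(w_2)$.
   Context: A set $\Omega$ is nearly convex if there is a convex set $C$ with $C\subset\Omega\subset\overline{C}$; $\operatorname{ri}\Omega=\{a\in\Omega:\exists\delta>0,\ B(a;\delta)\cap\operatorname{aff}\Omega\subset\Omega\}$. A function $f$ is nearly convex if $\operatorname{epi}f=\{(x,\lambda):f(x)\le\lambda\}$ is nearly convex, proper if $\operatorname{dom}f=\{f<\infty\}\neq\emptyset$ and $f>-\infty$. Fenchel conjugate: $f^*(w)=\sup_x\{\langle w,x\rangle-f(x)\}$. Infimal convolution: $(g\square h)(w)=\inf\{g(w_1)+h(w_2):w_1+w_2=w\}$. *)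

theory Defs
  imports "HOL-Analysis.Analysis" "HOL-Library.Extended_Real"
begin

definition nearly_convex_set :: "'a::real_normed_vector set \<Rightarrow> bool" where
  "nearly_convex_set \<Omega> \<longleftrightarrow> (\<exists>C. convex C \<and> C \<subseteq> \<Omega> \<and> \<Omega> \<subseteq> closure C)"

definition ri :: "'a::real_normed_vector set \<Rightarrow> 'a set" where
  "ri \<Omega> = {a \<in> \<Omega>. \<exists>\<delta>>0. ball a \<delta> \<inter> affine hull \<Omega> \<subseteq> \<Omega>}"

definition epi :: "('a \<Rightarrow> ereal) \<Rightarrow> ('a \<times> real) set" where
  "epi f = {(x, t). f x \<le> ereal t}"

definition edom :: "('a \<Rightarrow> ereal) \<Rightarrow> 'a set" where
  "edom f = {x. f x < \<infinity>}"

definition nearly_convex_fun :: "('a::real_normed_vector \<Rightarrow> ereal) \<Rightarrow> bool" where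
  "nearly_convex_fun f \<longleftrightarrow> nearly_convex_set (epi f)"

definition proper_fun :: "('a \<Rightarrow> ereal) \<Rightarrow> bool" where
  "proper_fun f \<longleftrightarrow> edom f \<noteq> {} \<and> (\<forall>x. f x \<noteq> -\<infinity>)"

definition fconj :: "('a::real_inner \<Rightarrow> ereal) \<Rightarrow> 'a \<Rightarrow> ereal" where
  "fconj f w = (SUP x. ereal (w \<bullet> x) - f x)"

definition infconv :: "('a::ab_group_add \<Rightarrow> ereal) \<Rightarrow> ('a \<Rightarrow> ereal) \<Rightarrow> 'a \<Rightarrow> ereal" where
  "infconv g h w = (INF p \<in> {(w1, w2). w1 + w2 = w}. g (fst p) + h (snd p))"

end

theory Submission
  imports Defs
begin

lemma core:
  fixes K C :: "('a::euclidean_space \<times> real) set" and c :: real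
  assumes cvx: "convex C" and CK: "C \<subseteq> K" and KC: "K \<subseteq> closure C"
    and absorb: "\<And>z. z \<in> fst ` K \<Longrightarrow> \<exists>e>0. (- e) *\<^sub>R z \<in> fst ` K"
    and lowb: "\<And>t. (0, t) \<in> K \<Longrightarrow> c \<le> t"
    and ne: "C \<noteq> {}"
  shows "\<exists>v. \<forall>z t. (z, t) \<in> K \<longrightarrow> v \<bullet> z + c \<le> t"
proof -
  define V where "V = {v::'a. \<forall>p\<in>fst ` K. p \<bullet> v = 0}"
  have subV: "subspace V" unfolding V_def subspace_def
    by (auto simp: inner_add_right)
  define S where "S = {(0::'a, t) | t. t < c}"
  define T where "T = C + (V \<times> {0::real})"
  have cS: "convex S"
  proof -
    have "S = (\<lambda>t. (0::'a, t)) ` {..<c}" unfolding S_def using lt_ex[of c] by auto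
    moreover have "convex ((\<lambda>t. (0::'a, t)) ` {..<c})"
      by (rule convex_linear_image) (auto intro: linearI simp: convex_real_interval)
    ultimately show ?thesis by simp
  qed
  have cT: "convex T" unfolding T_def
    by (intro convex_set_plus cvx convex_Times subspace_imp_convex subV) auto
  have neS: "S \<noteq> {}" unfolding S_def using lt_ex[of c] by auto
  have neT: "T \<noteq> {}"
  proof -
    obtain p where "p \<in> C" using ne by auto
    then have "p + (0, 0) \<in> T" unfolding T_def using subspace_0[OF subV]
      by (intro set_plus_intro) auto
    then show ?thesis by auto
  qed
  have disj: "S \<inter> T = {}"
  proof (rule ccontr)
    assume "S \<inter> T \<noteq> {}"
    then obtain t q s v where t: "t < c" and qs: "(q, s) \<in> C" and v: "v \<in> V"
      and eq: "(0, t) = (q, s) + (v, 0)"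
      unfolding S_def T_def set_plus_def by auto
    have "q = - v" "s = t" using eq by (auto simp: add_eq_0_iff2)
    have qK: "q \<in> fst ` K" using qs CK by force
    have "q \<in> V" using \<open>q = - v\<close> v subspace_neg[OF subV] by auto
    then have "q \<bullet> q = 0" using qK unfolding V_def by auto
    then have "q = 0" by simp
    then have "(0, t) \<in> K" using qs CK \<open>s = t\<close> by auto
    then show False using lowb t by force
  qed
  obtain a b where a0: "a \<noteq> 0" and aS: "\<forall>x\<in>S. a \<bullet> x \<le> b" and aT: "\<forall>x\<in>T. a \<bullet> x \<ge> b"
    using separating_hyperplane_sets[OF cS cT neS neT disj] by blast
  obtain u \<sigma> where a: "a = (u, \<sigma>)" by (cases a)
  have St: "\<sigma> * t \<le> b" if "t < c" for t
    using aS that unfolding S_def a by (auto simp: inner_Pair)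
  have sig: "0 \<le> \<sigma>"
  proof (rule ccontr)
    assume "\<not> 0 \<le> \<sigma>"
    then have "\<sigma> < 0" by simp
    define t where "t = min (c - 1) (b / \<sigma> - 1)"
    have "\<sigma> * t \<le> b" using St t_def by auto
    moreover have "t < b / \<sigma>" unfolding t_def by auto
    then have "b < t * \<sigma>" using \<open>\<sigma> < 0\<close> by (simp add: neg_less_divide_eq)
    ultimately show False by (simp add: mult.commute)
  qed
  have sigc: "\<sigma> * c \<le> b"
  proof (rule ccontr)
    assume "\<not> \<sigma> * c \<le> b"
    then have h: "\<sigma> * c > b" by simp
    show False
    proof (cases "\<sigma> = 0")
      case True then show ?thesis using St[of "c - 1"] h by simp
    next
      case False
      then have sp: "\<sigma> > 0" using sig by simp
      define t where "t = c - (\<sigma> * c - b) / (2 * \<sigma>)"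
      have "t < c" unfolding t_def using sp h by (simp add: field_simps)
      moreover have "\<sigma> * t = \<sigma> * c - (\<sigma> * c - b) / 2"
        unfolding t_def using sp by (simp add: field_simps)
      ultimately show False using St[of t] h by (simp add: field_simps)
    qed
  qed
  have Cineq: "u \<bullet> (z + v) + \<sigma> * t \<ge> b" if "(z, t) \<in> C" "v \<in> V" for z t v
  proof -
    have "(z + v, t) \<in> T" unfolding T_def set_plus_def using that by force
    then show ?thesis using aT a by (auto simp: inner_Pair)
  qed
  have Cineq0: "u \<bullet> z + \<sigma> * t \<ge> \<sigma> * c" if "(z, t) \<in> C" for z t
    using Cineq[OF that subspace_0[OF subV]] sigc by simp
  have Kineq: "u \<bullet> z + \<sigma> * t \<ge> \<sigma> * c" if "(z, t) \<in> K" for z t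
  proof -
    have "closed {p::'a \<times> real. u \<bullet> fst p + \<sigma> * snd p \<ge> \<sigma> * c}"
      by (intro closed_Collect_le continuous_intros)
    moreover have "C \<subseteq> {p. u \<bullet> fst p + \<sigma> * snd p \<ge> \<sigma> * c}" using Cineq0 by auto
    ultimately have "closure C \<subseteq> {p. u \<bullet> fst p + \<sigma> * snd p \<ge> \<sigma> * c}"
      by (rule closure_minimal[rotated])
    then show ?thesis using that KC by auto
  qed
  have uV: "u \<bullet> v = 0" if "v \<in> V" for v
  proof -
    obtain z t where zt: "(z, t) \<in> C" using ne by auto
    have "u \<bullet> z + \<sigma> * t + lam * (u \<bullet> v) \<ge> b" for lam
      using Cineq[OF zt subspace_scale[OF subV that, of lam]]
      by (simp add: inner_add_right algebra_simps)
    note H = this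
    show ?thesis
    proof (rule ccontr)
      assume nz: "u \<bullet> v \<noteq> 0"
      define A where "A = u \<bullet> z + \<sigma> * t"
      have "A + (- (\<bar>A - b\<bar> + 1) / (u \<bullet> v)) * (u \<bullet> v) = A - \<bar>A - b\<bar> - 1"
        using nz by simp
      moreover have "A + (- (\<bar>A - b\<bar> + 1) / (u \<bullet> v)) * (u \<bullet> v) \<ge> b"
        using H unfolding A_def by blast
      ultimately show False by linarith
    qed
  qed
  have sigpos: "\<sigma> > 0"
  proof (rule ccontr)
    assume "\<not> \<sigma> > 0"
    then have s0: "\<sigma> = 0" using sig by simp
    have "u \<in> V" unfolding V_def mem_Collect_eq
    proof (intro ballI)
      fix p assume p: "p \<in> fst ` K"
      then obtain t where "(p, t) \<in> K" by auto
      then have ge: "u \<bullet> p \<ge> 0" using Kineq s0 by force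
      obtain e where e: "e > 0" "(- e) *\<^sub>R p \<in> fst ` K" using absorb[OF p] by auto
      then obtain t' where "((- e) *\<^sub>R p, t') \<in> K" by auto
      then have "u \<bullet> ((- e) *\<^sub>R p) \<ge> 0" using Kineq s0 by force
      then have "u \<bullet> p \<le> 0" using e(1) by (simp add: mult_le_0_iff)
      then show "p \<bullet> u = 0" using ge by (simp add: inner_commute)
    qed
    then have "u \<bullet> u = 0" using uV by blast
    then have "u = 0" by simp
    then show False using a0 a s0 by (simp add: zero_prod_def)
  qed
  show ?thesis
  proof (intro exI allI impI)
    fix z t assume "(z, t) \<in> K"
    then have "u \<bullet> z + \<sigma> * t \<ge> \<sigma> * c" by (rule Kineq)
    then show "(- (1/\<sigma>) *\<^sub>R u) \<bullet> z + c \<le> t" using sigpos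
      by (simp add: field_simps)
  qed
qed

lemma ri_step:
  fixes D :: "'a::euclidean_space set"
  assumes x0: "x0 \<in> ri D" and x: "x \<in> D"
  shows "\<exists>\<epsilon>>0. \<forall>e. 0 < e \<and> e \<le> \<epsilon> \<longrightarrow> x0 + e *\<^sub>R (x0 - x) \<in> D"
proof -
  obtain \<delta> where d: "\<delta> > 0" "ball x0 \<delta> \<inter> affine hull D \<subseteq> D" and x0D: "x0 \<in> D"
    using x0 unfolding ri_def by auto
  define \<epsilon> where "\<epsilon> = \<delta> / (norm (x0 - x) + 1)"
  have ep: "\<epsilon> > 0" unfolding \<epsilon>_def using d norm_ge_zero[of "x0 - x"]
    by (intro divide_pos_pos) linarith+
  show ?thesis
  proof (intro exI conjI allI impI, rule ep)
    fix e assume e: "0 < e \<and> e \<le> \<epsilon>"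
    have "x0 + e *\<^sub>R (x0 - x) \<in> affine hull D"
      by (intro mem_affine_3_minus affine_affine_hull hull_inc x0D x)
    moreover have "e * norm (x0 - x) < \<delta>"
    proof -
      have "e * norm (x0 - x) \<le> \<epsilon> * norm (x0 - x)" using e by (simp add: mult_right_mono)
      also have "\<dots> < \<epsilon> * (norm (x0 - x) + 1)" using ep by simp
      also have "\<dots> = \<delta>"
      proof -
        have "norm (x0 - x) + 1 \<noteq> 0" using norm_ge_zero[of "x0 - x"] by linarith
        then show ?thesis unfolding \<epsilon>_def by simp
      qed
      finally show ?thesis .
    qed
    then have "x0 + e *\<^sub>R (x0 - x) \<in> ball x0 \<delta>" using e by (simp add: dist_norm)
    ultimately show "x0 + e *\<^sub>R (x0 - x) \<in> D" using d by auto
  qed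
qed

lemma fin_bound: "(f x :: ereal) < \<infinity> \<Longrightarrow> \<exists>s. f x \<le> ereal s"
  by (cases "f x") auto

lemma fconj_ge:
  assumes "f x = ereal a"
  shows "ereal (w \<bullet> x - a) \<le> fconj f w"
proof -
  have "ereal (w \<bullet> x) - f x \<le> fconj f w" unfolding fconj_def by (rule SUP_upper) auto
  then show ?thesis using assms by simp
qed

lemma fconj_le:
  assumes "proper_fun f" and "\<And>x a. f x = ereal a \<Longrightarrow> w \<bullet> x - a \<le> M"
  shows "fconj f w \<le> ereal M"
  unfolding fconj_def
proof (rule SUP_least)
  fix x
  show "ereal (w \<bullet> x) - f x \<le> ereal M"
  proof (cases "f x")
    case (real r) then show ?thesis using assms(2)[of x r] by simp
  next
    case PInf then show ?thesis by simp
  next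
    case MInf then show ?thesis using assms(1) unfolding proper_fun_def by auto
  qed
qed

lemma fconj_sum_le:
  assumes p1: "proper_fun f1" and p2: "proper_fun f2" and w: "w = w1 + w2"
  shows "fconj (\<lambda>x. f1 x + f2 x) w \<le> fconj f1 w1 + fconj f2 w2"
  unfolding fconj_def[of "\<lambda>x. f1 x + f2 x"]
proof (rule SUP_least)
  fix x
  have n1: "f1 x \<noteq> -\<infinity>" and n2: "f2 x \<noteq> -\<infinity>" using p1 p2 unfolding proper_fun_def by auto
  show "ereal (w \<bullet> x) - (f1 x + f2 x) \<le> fconj f1 w1 + fconj f2 w2"
  proof (cases "f1 x = \<infinity> \<or> f2 x = \<infinity>")
    case True
    have e: "f1 x + f2 x = \<infinity>" using True n1 n2 by auto
    show ?thesis unfolding e by simp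
  next
    case False
    then obtain a b where a: "f1 x = ereal a" and b: "f2 x = ereal b" using n1 n2
      by (cases "f1 x"; cases "f2 x") auto
    have "ereal (w \<bullet> x) - (f1 x + f2 x) = ereal (w1 \<bullet> x - a) + ereal (w2 \<bullet> x - b)"
      using a b w by (simp add: inner_add_left)
    also have "\<dots> \<le> fconj f1 w1 + fconj f2 w2"
      by (intro add_mono fconj_ge a b)
    finally show ?thesis .
  qed
qed

theorem theorem6p6:
  fixes f1 f2 :: "'a::euclidean_space \<Rightarrow> ereal"
  assumes "proper_fun f1" and "proper_fun f2"
    and "nearly_convex_fun f1" and "nearly_convex_fun f2"
    and "ri (edom f1) \<inter> ri (edom f2) \<noteq> {}"
  shows "(\<forall>w. fconj (\<lambda>x. f1 x + f2 x) w = infconv (fconj f1) (fconj f2) w)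
    \<and> (\<forall>w. fconj (\<lambda>x. f1 x + f2 x) w \<noteq> \<infinity> \<and> fconj (\<lambda>x. f1 x + f2 x) w \<noteq> -\<infinity> \<longrightarrow>
          (\<exists>w1 w2. w = w1 + w2 \<and>
             fconj (\<lambda>x. f1 x + f2 x) w = fconj f1 w1 + fconj f2 w2))"
proof -
  note p1 = assms(1) and p2 = assms(2)
  obtain x0 where x0: "x0 \<in> ri (edom f1)" "x0 \<in> ri (edom f2)" using assms(5) by blast
  have x0d: "x0 \<in> edom f1" "x0 \<in> edom f2" using x0 unfolding ri_def by auto
  have nm1: "\<And>x. f1 x \<noteq> -\<infinity>" and nm2: "\<And>x. f2 x \<noteq> -\<infinity>"
    using p1 p2 unfolding proper_fun_def by auto
  obtain a0 where a0: "f1 x0 = ereal a0"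
    using x0d(1) nm1[of x0] unfolding edom_def by (cases "f1 x0") auto
  obtain b0 where b0: "f2 x0 = ereal b0"
    using x0d(2) nm2[of x0] unfolding edom_def by (cases "f2 x0") auto
  have easy: "fconj (\<lambda>x. f1 x + f2 x) w \<le> fconj f1 w1 + fconj f2 w2" if "w = w1 + w2" for w w1 w2
    using fconj_sum_le[OF p1 p2 that] .
  have le_inf: "fconj (\<lambda>x. f1 x + f2 x) w \<le> infconv (fconj f1) (fconj f2) w" for w
    unfolding infconv_def
  proof (rule INF_greatest)
    fix p assume "p \<in> {(w1, w2). w1 + w2 = w}"
    then show "fconj (\<lambda>x. f1 x + f2 x) w \<le> fconj f1 (fst p) + fconj f2 (snd p)"
      using easy[of w "fst p" "snd p"] by auto
  qed
  have sup_ge: "ereal (w \<bullet> x - (a + b)) \<le> fconj (\<lambda>x. f1 x + f2 x) w"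
    if "f1 x = ereal a" "f2 x = ereal b" for w x a b
  proof -
    have "ereal (w \<bullet> x) - (f1 x + f2 x) \<le> fconj (\<lambda>x. f1 x + f2 x) w"
      unfolding fconj_def by (rule SUP_upper) auto
    then show ?thesis using that by simp
  qed
  have main: "\<exists>w1 w2. w = w1 + w2 \<and> fconj f1 w1 + fconj f2 w2 \<le> fconj (\<lambda>x. f1 x + f2 x) w"
    if fin: "fconj (\<lambda>x. f1 x + f2 x) w \<noteq> \<infinity>" for w
  proof -
    obtain \<alpha> where \<alpha>: "fconj (\<lambda>x. f1 x + f2 x) w = ereal \<alpha>"
      using fin sup_ge[OF a0 b0, of w] by (cases "fconj (\<lambda>x. f1 x + f2 x) w") auto
    have sup: "w \<bullet> x - s - r \<le> \<alpha>" if "f1 x \<le> ereal s" "f2 x \<le> ereal r" for x s r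
    proof -
      have "\<exists>a. f1 x = ereal a \<and> a \<le> s" using that(1) nm1[of x] by (cases "f1 x") auto
      then obtain a where a: "f1 x = ereal a" "a \<le> s" by blast
      have "\<exists>b. f2 x = ereal b \<and> b \<le> r" using that(2) nm2[of x] by (cases "f2 x") auto
      then obtain b where b: "f2 x = ereal b" "b \<le> r" by blast
      have "w \<bullet> x - (a + b) \<le> \<alpha>" using sup_ge[OF a(1) b(1), of w] \<alpha> by simp
      then show ?thesis using a b by linarith
    qed
    obtain C1 where C1: "convex C1" "C1 \<subseteq> epi f1" "epi f1 \<subseteq> closure C1"
      using assms(3) unfolding nearly_convex_fun_def nearly_convex_set_def by blast
    obtain C2 where C2: "convex C2" "C2 \<subseteq> epi f2" "epi f2 \<subseteq> closure C2"
      using assms(4) unfolding nearly_convex_fun_def nearly_convex_set_def by blast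
    define L where "L = (\<lambda>p::('a \<times> real) \<times> ('a \<times> real).
      (fst (fst p) - fst (snd p), snd (fst p) + snd (snd p) - w \<bullet> fst (fst p)))"
    have linL: "linear L" unfolding L_def
      by (rule linearI) (auto simp: algebra_simps inner_add_right inner_scaleR_right)
    define K where "K = L ` (epi f1 \<times> epi f2)"
    define C where "C = L ` (C1 \<times> C2)"
    have cC: "convex C" unfolding C_def
      by (intro convex_linear_image linL convex_Times C1(1) C2(1))
    have CK: "C \<subseteq> K" unfolding C_def K_def using C1(2) C2(2) by blast
    have KC: "K \<subseteq> closure C"
    proof -
      have "L ` closure (C1 \<times> C2) \<subseteq> closure C"
        by (rule image_closure_subset) (auto simp: C_def L_def intro!: continuous_intros closure_subset)
      moreover have "epi f1 \<times> epi f2 \<subseteq> closure (C1 \<times> C2)"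
        unfolding closure_Times using C1(3) C2(3) by blast
      ultimately show ?thesis unfolding K_def by blast
    qed
    have neC: "C \<noteq> {}"
    proof -
      have "(x0, a0) \<in> epi f1" "(x0, b0) \<in> epi f2" unfolding epi_def using a0 b0 by auto
      then have "C1 \<noteq> {}" "C2 \<noteq> {}" using C1(3) C2(3) by auto
      then show ?thesis unfolding C_def by auto
    qed
    have memK: "(x - y, s + r - w \<bullet> x) \<in> K" if "f1 x \<le> ereal s" "f2 y \<le> ereal r" for x y s r
    proof -
      have "((x, s), (y, r)) \<in> epi f1 \<times> epi f2" unfolding epi_def using that by auto
      then show ?thesis unfolding K_def by (rule image_eqI[rotated]) (simp add: L_def)
    qed
    have elimK: "\<exists>x y s r. f1 x \<le> ereal s \<and> f2 y \<le> ereal r \<and> z = x - y \<and> t = s + r - w \<bullet> x"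
      if "(z, t) \<in> K" for z t
      using that unfolding K_def L_def epi_def by force
    have absorb: "\<exists>e>0. (- e) *\<^sub>R z \<in> fst ` K" if zK: "z \<in> fst ` K" for z
    proof -
      obtain t where "(z, t) \<in> K" using zK by auto
      then obtain x y s r where xy: "f1 x \<le> ereal s" "f2 y \<le> ereal r" "z = x - y"
        using elimK by blast
      have xd: "x \<in> edom f1" and yd: "y \<in> edom f2"
        unfolding edom_def using le_less_trans[OF xy(1), of \<infinity>] le_less_trans[OF xy(2), of \<infinity>]
        by simp_all
      obtain e1 where e1: "e1 > 0" "\<forall>e. 0 < e \<and> e \<le> e1 \<longrightarrow> x0 + e *\<^sub>R (x0 - x) \<in> edom f1"
        using ri_step[OF x0(1) xd] by blast
      obtain e2 where e2: "e2 > 0" "\<forall>e. 0 < e \<and> e \<le> e2 \<longrightarrow> x0 + e *\<^sub>R (x0 - y) \<in> edom f2"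
        using ri_step[OF x0(2) yd] by blast
      define e where "e = min e1 e2"
      have ep: "e > 0" using e1 e2 unfolding e_def by auto
      have "x0 + e *\<^sub>R (x0 - x) \<in> edom f1" using e1 ep unfolding e_def by auto
      then obtain s' where s': "f1 (x0 + e *\<^sub>R (x0 - x)) \<le> ereal s'"
        unfolding edom_def using fin_bound[of f1 "x0 + e *\<^sub>R (x0 - x)"] by auto
      have "x0 + e *\<^sub>R (x0 - y) \<in> edom f2" using e2 ep unfolding e_def by auto
      then obtain r' where r': "f2 (x0 + e *\<^sub>R (x0 - y)) \<le> ereal r'"
        unfolding edom_def using fin_bound[of f2 "x0 + e *\<^sub>R (x0 - y)"] by auto
      have "(x0 + e *\<^sub>R (x0 - x)) - (x0 + e *\<^sub>R (x0 - y)) = (- e) *\<^sub>R z"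
        using xy(3) by (simp add: algebra_simps flip: scaleR_right_distrib)
      then have "(- e) *\<^sub>R z \<in> fst ` K" using memK[OF s' r']
        by (metis fst_conv image_eqI)
      then show ?thesis using ep by blast
    qed
    have lowb: "- \<alpha> \<le> t" if tK: "(0, t) \<in> K" for t
    proof -
      obtain x y s r where xy: "f1 x \<le> ereal s" "f2 y \<le> ereal r" "0 = x - y" "t = s + r - w \<bullet> x"
        using elimK[OF tK] by blast
      then have "y = x" by simp
      then have "w \<bullet> x - s - r \<le> \<alpha>" using sup[OF xy(1)] xy(2) by simp
      then show ?thesis using xy(4) by linarith
    qed
    obtain v where v: "\<forall>z t. (z, t) \<in> K \<longrightarrow> v \<bullet> z + - \<alpha> \<le> t"
      using core[OF cC CK KC absorb lowb neC] by blast
    have key: "(w + v) \<bullet> x - s + (- v) \<bullet> y - r \<le> \<alpha>"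
      if "f1 x \<le> ereal s" "f2 y \<le> ereal r" for x y s r
    proof -
      have "v \<bullet> (x - y) + - \<alpha> \<le> s + r - w \<bullet> x" using v memK[OF that] by blast
      then show ?thesis by (simp add: inner_diff_right inner_add_left algebra_simps)
    qed
    have "ereal ((- v) \<bullet> x0 - b0) \<le> fconj f2 (- v)" by (rule fconj_ge[of f2 x0, OF b0])
    moreover have "fconj f2 (- v) \<le> ereal (\<alpha> - ((w + v) \<bullet> x0 - a0))"
    proof (rule fconj_le[OF p2])
      fix y b assume "f2 y = ereal b"
      then show "(- v) \<bullet> y - b \<le> \<alpha> - ((w + v) \<bullet> x0 - a0)"
        using key[of x0 a0 y b] a0 by simp
    qed
    ultimately obtain \<beta> where \<beta>: "fconj f2 (- v) = ereal \<beta>"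
      by (cases "fconj f2 (- v)") auto
    have f1b: "fconj f1 (w + v) \<le> ereal (\<alpha> - \<beta>)"
    proof (rule fconj_le[OF p1])
      fix x a assume a: "f1 x = ereal a"
      have "fconj f2 (- v) \<le> ereal (\<alpha> - ((w + v) \<bullet> x - a))"
      proof (rule fconj_le[OF p2])
        fix y b assume "f2 y = ereal b"
        then show "(- v) \<bullet> y - b \<le> \<alpha> - ((w + v) \<bullet> x - a)"
          using key[of x a y b] a by simp
      qed
      then show "(w + v) \<bullet> x - a \<le> \<alpha> - \<beta>" using \<beta> by simp
    qed
    have "fconj f1 (w + v) + fconj f2 (- v) \<le> ereal (\<alpha> - \<beta>) + ereal \<beta>"
      using f1b \<beta> by (intro add_mono) auto
    then have "fconj f1 (w + v) + fconj f2 (- v) \<le> fconj (\<lambda>x. f1 x + f2 x) w"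
      using \<alpha> by simp
    moreover have "w = (w + v) + (- v)" by simp
    ultimately show ?thesis by blast
  qed
  have eq: "fconj (\<lambda>x. f1 x + f2 x) w = infconv (fconj f1) (fconj f2) w" for w
  proof (cases "fconj (\<lambda>x. f1 x + f2 x) w = \<infinity>")
    case True
    then have "\<infinity> \<le> infconv (fconj f1) (fconj f2) w" using le_inf[of w] by simp
    then have "infconv (fconj f1) (fconj f2) w = \<infinity>" by (intro antisym) simp_all
    then show ?thesis using True by simp
  next
    case False
    obtain w1 w2 where ww: "w = w1 + w2" "fconj f1 w1 + fconj f2 w2 \<le> fconj (\<lambda>x. f1 x + f2 x) w"
      using main[OF False] by blast
    have "infconv (fconj f1) (fconj f2) w \<le> fconj f1 w1 + fconj f2 w2"
      unfolding infconv_def by (rule INF_lower2[of "(w1, w2)"]) (use ww in auto)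
    then have "infconv (fconj f1) (fconj f2) w \<le> fconj (\<lambda>x. f1 x + f2 x) w"
      using ww(2) by (rule order_trans)
    then show ?thesis using le_inf[of w] by (rule antisym[rotated])
  qed
  show ?thesis
  proof (intro conjI allI impI)
    fix w show "fconj (\<lambda>x. f1 x + f2 x) w = infconv (fconj f1) (fconj f2) w" by (rule eq)
  next
    fix w assume "fconj (\<lambda>x. f1 x + f2 x) w \<noteq> \<infinity> \<and> fconj (\<lambda>x. f1 x + f2 x) w \<noteq> - \<infinity>"
    then obtain w1 w2 where ww: "w = w1 + w2" "fconj f1 w1 + fconj f2 w2 \<le> fconj (\<lambda>x. f1 x + f2 x) w"
      using main by blast
    then show "\<exists>w1 w2. w = w1 + w2 \<and> fconj (\<lambda>x. f1 x + f2 x) w = fconj f1 w1 + fconj f2 w2"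
      using easy[OF ww(1)] by (intro exI[of _ w1] exI[of _ w2]) auto
  qed
qed

end
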